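(* Let $s\in\{+1,-1\}$ and let $q\ge1$ be an integer. Let $f:\mathbb Z_{2q+1}\to\mathbb R$ be nonzero and even, with $sf(0)\le0$ and $\widehat f(0)\le0$. Then $$\#\{n\in\mathbb Z_{2q+1}: f(n)<0\}\cdot\#\{k\in\mathbb Z_{2q+1}: s\widehat f(k)<0\}\ \ge\ \frac{2q+1}{16}.$$
   Context: $\mathbb Z_{2q+1}$ is the group of integers modulo $2q+1$, with representatives $\{-q,\dots,q\}$. The discrete Fourier transform is $\widehat f(k)=\frac{1}{\sqrt{2q+1}}\sum_{n=-q}^qf(n)e^{-2\pi ikn/(2q+1)}$; for even real $f$ it is real and even. *)

theory Defs
  imports Complex_Main
begin

text \<open>Z_(2q+1) is represented by the integers {-q..q}; functions on it are
  functions int => real, only their values on {-q..q} matter.\<close>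

definition dft :: "int \<Rightarrow> (int \<Rightarrow> real) \<Rightarrow> int \<Rightarrow> complex" where
  "dft q f k = (1 / complex_of_real (sqrt (real_of_int (2*q+1)))) *
     (\<Sum>n\<in>{-q..q}. complex_of_real (f n) *
        exp (- 2 * pi * \<i> * of_int k * of_int n / of_int (2*q+1)))"

end

theory Submission
  imports Defs
begin

lemma cos_tele:
  fixes a b :: int and t :: real
  assumes "a - 1 \<le> b"
  shows "2 * sin (t/2) * (\<Sum>k\<in>{a..b}. cos (of_int k * t)) = sin ((of_int b + 1/2) * t) - sin ((of_int a - 1/2) * t)"
  using assms
proof (induction b rule: int_ge_induct)
  case base
  then show ?case by simp
next
  case (step b)
  have e: "{a..b+1} = insert (b+1) {a..b}" using step by auto
  have "2 * sin (t/2) * cos (of_int (b+1) * t) = sin (of_int (b+1) * t + t/2) - sin (of_int (b+1) * t - t/2)"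
    by (simp add: sin_add sin_diff)
  moreover have "of_int (b+1) * t + t/2 = (of_int (b+1) + 1/2) * t" by (simp add: algebra_simps)
  moreover have "of_int (b+1) * t - t/2 = (of_int b + 1/2) * t" by (simp add: algebra_simps)
  ultimately show ?case using step by (simp add: e distrib_left)
qed

lemma cos_orth:
  fixes q j :: int
  assumes "q \<ge> 0" "j \<noteq> 0" "\<bar>j\<bar> \<le> 2*q"
  shows "(\<Sum>k\<in>{-q..q}. cos (2*pi*of_int k*of_int j / of_int (2*q+1))) = 0"
proof -
  define N where "N = real_of_int (2*q+1)"
  have Npos: "N > 0" using assms by (simp add: N_def)
  define t where "t = 2*pi*of_int j / N"
  have s1: "sin (t/2) \<noteq> 0"
  proof
    assume "sin (t/2) = 0"
    then obtain i :: int where i: "t/2 = of_int i * pi" by (auto simp: sin_zero_iff_int2)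
    hence "pi * of_int j / N = of_int i * pi" by (simp add: t_def)
    hence "of_int j = of_int i * N" using Npos by (simp add: field_simps)
    hence "j = i * (2*q+1)" unfolding N_def by (metis of_int_eq_iff of_int_mult)
    moreover have "i \<noteq> 0" using assms \<open>j = i * (2*q+1)\<close> by auto
    ultimately have "\<bar>j\<bar> \<ge> 2*q+1" using assms by (simp add: abs_mult)
    with assms show False by simp
  qed
  have a: "(of_int q + 1/2) * t = of_int j * pi" using Npos by (simp add: t_def N_def field_simps)
  have b: "(of_int (-q) - 1/2) * t = of_int (-j) * pi" using Npos by (simp add: t_def N_def field_simps)
  have "2 * sin (t/2) * (\<Sum>k\<in>{-q..q}. cos (of_int k * t)) = 0"
  proof -
    have z1: "sin (of_int j * pi) = 0" "sin (of_int (-j) * pi) = 0" by (auto simp: sin_zero_iff_int2 simp del: of_int_minus)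
    show ?thesis using cos_tele[of "-q" q t] assms a b z1 by (simp del: of_int_minus)
  qed
  hence "(\<Sum>k\<in>{-q..q}. cos (of_int k * t)) = 0" using s1 by simp
  moreover have "\<And>k. cos (of_int k * t) = cos (2*pi*of_int k*of_int j / of_int (2*q+1))"
    by (simp add: t_def N_def mult_ac)
  ultimately show ?thesis by simp
qed

lemma Re_dft:
  "Re (dft q f k) = (1 / sqrt (real_of_int (2*q+1))) *
     (\<Sum>n\<in>{-q..q}. f n * cos (2*pi*of_int k*of_int n / of_int (2*q+1)))"
proof -
  have e: "exp (- 2 * pi * \<i> * of_int k * of_int n / of_int (2*q+1))
      = cis (-(2*pi*of_int k*of_int n / of_int (2*q+1)))" for n
    by (simp add: cis_conv_exp algebra_simps)
  have "Re (complex_of_real (f n) * cis x) = f n * cos x" for n x by simp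
  have m: "1 / complex_of_real r * z = z / complex_of_real r" for r z by simp
  show ?thesis unfolding dft_def e m Re_divide_of_real
    by simp
qed

lemma cos_sum_full:
  fixes q j :: int
  assumes "q \<ge> 0" "\<bar>j\<bar> \<le> 2*q"
  shows "(\<Sum>k\<in>{-q..q}. cos (2*pi*of_int k*of_int j / of_int (2*q+1))) = (if j = 0 then real_of_int (2*q+1) else 0)"
proof (cases "j = 0")
  case True
  have "card {-q..q} = nat (2*q+1)" by simp
  then show ?thesis using True assms by simp
next
  case False
  then show ?thesis using cos_orth[OF assms(1) False assms(2)] by simp
qed

lemma inner_sum:
  fixes q n m :: int
  assumes "q \<ge> 0" "n \<in> {-q..q}" "m \<in> {-q..q}"
  shows "(\<Sum>k\<in>{-q..q}. cos (2*pi*of_int k*of_int n / of_int (2*q+1)) * cos (2*pi*of_int k*of_int m / of_int (2*q+1)))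
     = real_of_int (2*q+1) / 2 * ((if n = m then 1 else 0) + (if n = -m then 1 else 0))"
proof -
  have e: "cos (2*pi*of_int k*of_int n / of_int (2*q+1)) * cos (2*pi*of_int k*of_int m / of_int (2*q+1))
     = (cos (2*pi*of_int k*of_int (n-m) / of_int (2*q+1)) + cos (2*pi*of_int k*of_int (n+m) / of_int (2*q+1))) / 2" for k
    unfolding cos_times_cos by (simp add: algebra_simps diff_divide_distrib add_divide_distrib)
  have "(\<Sum>k\<in>{-q..q}. cos (2*pi*of_int k*of_int n / of_int (2*q+1)) * cos (2*pi*of_int k*of_int m / of_int (2*q+1)))
     = ((\<Sum>k\<in>{-q..q}. cos (2*pi*of_int k*of_int (n-m) / of_int (2*q+1))) + (\<Sum>k\<in>{-q..q}. cos (2*pi*of_int k*of_int (n+m) / of_int (2*q+1)))) / 2"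
    unfolding e by (simp only: sum_divide_distrib[symmetric] sum.distrib)
  also have "\<dots> = ((if n - m = 0 then real_of_int (2*q+1) else 0) + (if n + m = 0 then real_of_int (2*q+1) else 0)) / 2"
  proof -
    have b1: "\<bar>n - m\<bar> \<le> 2*q" "\<bar>n + m\<bar> \<le> 2*q" using assms by auto
    show ?thesis by (simp only: cos_sum_full[OF assms(1) b1(1)] cos_sum_full[OF assms(1) b1(2)])
  qed
  finally show ?thesis by auto
qed

lemma inversion:
  fixes q m :: int and f :: "int \<Rightarrow> real"
  assumes "q \<ge> 0" and even: "\<forall>n\<in>{-q..q}. f (-n) = f n" and m: "m \<in> {-q..q}"
  shows "f m = (1 / sqrt (real_of_int (2*q+1))) * (\<Sum>k\<in>{-q..q}. Re (dft q f k) * cos (2*pi*of_int k*of_int m / of_int (2*q+1)))"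
proof -
  define N where "N = real_of_int (2*q+1)"
  define C where "C k n = cos (2*pi*of_int k*of_int n / of_int (2*q+1))" for k n :: int
  have Npos: "N > 0" using assms by (simp add: N_def)
  have s1: "Re (dft q f k) * C k m = (1/sqrt N) * (\<Sum>n\<in>{-q..q}. f n * (C k n * C k m))" for k
  proof -
    have "Re (dft q f k) = (1/sqrt N) * (\<Sum>n\<in>{-q..q}. f n * C k n)"
      unfolding Re_dft C_def N_def by simp
    then show ?thesis by (simp add: sum_distrib_right mult.assoc)
  qed
  have "(\<Sum>k\<in>{-q..q}. Re (dft q f k) * C k m) = (\<Sum>k\<in>{-q..q}. (1/sqrt N) * (\<Sum>n\<in>{-q..q}. f n * (C k n * C k m)))"
    using s1 by simp
  also have "\<dots> = (1/sqrt N) * (\<Sum>k\<in>{-q..q}. (\<Sum>n\<in>{-q..q}. f n * (C k n * C k m)))"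
    by (simp only: sum_distrib_left)
  also have "\<dots> = (1/sqrt N) * (\<Sum>n\<in>{-q..q}. (\<Sum>k\<in>{-q..q}. f n * (C k n * C k m)))"
    by (subst sum.swap) (rule refl)
  also have "\<dots> = (1/sqrt N) * (\<Sum>n\<in>{-q..q}. f n * (\<Sum>k\<in>{-q..q}. C k n * C k m))"
    by (simp only: sum_distrib_left)
  also have "\<dots> = (1/sqrt N) * (\<Sum>n\<in>{-q..q}. f n * (N / 2 * ((if n = m then 1 else 0) + (if n = -m then 1 else 0))))"
  proof -
    have "(\<Sum>k\<in>{-q..q}. C k n * C k m) = N / 2 * ((if n = m then 1 else 0) + (if n = -m then 1 else 0))"
      if "n \<in> {-q..q}" for n
      unfolding C_def N_def using inner_sum[OF assms(1) that m] .
    then show ?thesis by (metis (no_types, lifting) sum.cong)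
  qed
  also have "\<dots> = (1/sqrt N) * (\<Sum>n\<in>{-q..q}. N / 2 * (if n = m then f n else 0) + N/2 * (if n = -m then f n else 0))"
    by (intro arg_cong[where f="\<lambda>x. _ * x"] sum.cong refl) (simp add: algebra_simps)
  also have "\<dots> = (1/sqrt N) * (N/2 * f m + N/2 * f (-m))"
  proof -
    have m2: "-m \<in> {-q..q}" using m by auto
    have d1: "(\<Sum>n\<in>{-q..q}. (if n = m then f n else 0)) = f m" using m by simp
    have d2: "(\<Sum>n\<in>{-q..q}. (if n = -m then f n else 0)) = f (-m)" using m2 by (simp only: sum.delta finite_atLeastAtMost if_True)
    show ?thesis by (simp only: sum.distrib sum_distrib_left[symmetric] d1 d2)
  qed
  also have "\<dots> = (1/sqrt N) * (N * f m)" using even m by simp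
  finally have "(\<Sum>k\<in>{-q..q}. Re (dft q f k) * C k m) = (1/sqrt N) * (N * f m)" .
  moreover have "(1/sqrt N) * ((1/sqrt N) * (N * f m)) = f m"
    using Npos by (simp add: field_simps)
  ultimately show ?thesis unfolding C_def N_def by simp
qed


theorem mainTheorem15:
  fixes q :: int and s :: real and f :: "int \<Rightarrow> real"
  assumes "s = 1 \<or> s = -1"
    and "q \<ge> 1"
    and nonzero: "\<exists>n\<in>{-q..q}. f n \<noteq> 0"
    and even: "\<forall>n\<in>{-q..q}. f (-n) = f n"
    and "s * f 0 \<le> 0"
    and "Re (dft q f 0) \<le> 0"
  shows "real (card {n\<in>{-q..q}. f n < 0}) * real (card {k\<in>{-q..q}. s * Re (dft q f k) < 0})
           \<ge> real_of_int (2*q+1) / 16"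
proof -
  define N where "N = real_of_int (2*q+1)"
  define sN where "sN = sqrt N"
  define g where "g k = Re (dft q f k)" for k
  define R where "R = {-q..q}"
  define A where "A = {n\<in>R. f n < 0}"
  define B where "B = {k\<in>R. s * g k < 0}"
  define F1 where "F1 = (\<Sum>n\<in>R. \<bar>f n\<bar>)"
  define G1 where "G1 = (\<Sum>k\<in>R. \<bar>g k\<bar>)"
  have q0: "q \<ge> 0" using assms by simp
  have Npos: "N > 0" using assms by (simp add: N_def)
  have sNpos: "sN > 0" using Npos by (simp add: sN_def)
  have sNsq: "sN * sN = N" using Npos by (simp add: sN_def)
  have fin: "finite R" by (simp add: R_def)
  have sabs: "\<bar>s\<bar> = 1" using assms(1) by auto
  have ga: "\<bar>g k\<bar> \<le> F1 / sN" for k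
  proof -
    have "g k = (1/sN) * (\<Sum>n\<in>R. f n * cos (2*pi*of_int k*of_int n / of_int (2*q+1)))"
      unfolding g_def Re_dft sN_def N_def R_def ..
    moreover have "\<bar>\<Sum>n\<in>R. f n * cos (2*pi*of_int k*of_int n / of_int (2*q+1))\<bar> \<le> F1"
      unfolding F1_def
      by (rule order_trans[OF sum_abs sum_mono]) (simp add: abs_mult mult_left_le abs_cos_le_one)
    ultimately show ?thesis using sNpos by (simp add: abs_mult divide_right_mono)
  qed
  have fa: "\<bar>f m\<bar> \<le> G1 / sN" if "m \<in> R" for m
  proof -
    have "f m = (1/sN) * (\<Sum>k\<in>R. g k * cos (2*pi*of_int k*of_int m / of_int (2*q+1)))"
      using inversion[OF q0 even that[unfolded R_def]] unfolding g_def sN_def N_def R_def .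
    moreover have "\<bar>\<Sum>k\<in>R. g k * cos (2*pi*of_int k*of_int m / of_int (2*q+1))\<bar> \<le> G1"
      unfolding G1_def
      by (rule order_trans[OF sum_abs sum_mono]) (simp add: abs_mult mult_left_le abs_cos_le_one)
    ultimately show ?thesis using sNpos by (simp add: abs_mult divide_right_mono)
  qed
  have sumf: "(\<Sum>n\<in>R. f n) \<le> 0"
  proof -
    have "g 0 = (1/sN) * (\<Sum>n\<in>R. f n)"
      unfolding g_def Re_dft sN_def N_def R_def by simp
    with assms(6) sNpos show ?thesis unfolding g_def
      by (auto simp: divide_le_0_iff)
  qed
  have sumg: "(\<Sum>k\<in>R. s * g k) \<le> 0"
  proof -
    have "f 0 = (1/sN) * (\<Sum>k\<in>R. g k)"
      using inversion[OF q0 even, of 0] q0 unfolding g_def sN_def N_def R_def by simp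
    hence "s * f 0 = (1/sN) * (\<Sum>k\<in>R. s * g k)" by (simp add: sum_distrib_left)
    with assms(5) sNpos show ?thesis
      by (auto simp: divide_le_0_iff)
  qed
  have e1: "F1 \<le> 2 * (\<Sum>n\<in>A. \<bar>f n\<bar>)"
  proof -
    have "F1 \<le> (\<Sum>n\<in>R. f n + 2 * (if f n < 0 then \<bar>f n\<bar> else 0))"
      unfolding F1_def by (rule sum_mono) auto
    also have "\<dots> = (\<Sum>n\<in>R. f n) + 2 * (\<Sum>n\<in>A. \<bar>f n\<bar>)"
      unfolding A_def by (simp only: sum.distrib sum_distrib_left[symmetric] sum.inter_filter[OF fin, symmetric])
    finally show ?thesis using sumf by simp
  qed
  have e2: "(\<Sum>n\<in>A. \<bar>f n\<bar>) \<le> real (card A) * (G1 / sN)"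
    by (rule sum_bounded_above) (use fa in \<open>force simp: A_def\<close>)
  have e3: "G1 \<le> 2 * (\<Sum>k\<in>B. \<bar>g k\<bar>)"
  proof -
    have "G1 \<le> (\<Sum>k\<in>R. s * g k + 2 * (if s * g k < 0 then \<bar>g k\<bar> else 0))"
      unfolding G1_def
    proof (rule sum_mono)
      fix k
      have "\<bar>g k\<bar> = \<bar>s * g k\<bar>" using sabs by (simp add: abs_mult)
      then show "\<bar>g k\<bar> \<le> s * g k + 2 * (if s * g k < 0 then \<bar>g k\<bar> else 0)" by auto
    qed
    also have "\<dots> = (\<Sum>k\<in>R. s * g k) + 2 * (\<Sum>k\<in>B. \<bar>g k\<bar>)"
      unfolding B_def by (simp only: sum.distrib sum_distrib_left[symmetric] sum.inter_filter[OF fin, symmetric])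
    finally show ?thesis using sumg by simp
  qed
  have e4: "(\<Sum>k\<in>B. \<bar>g k\<bar>) \<le> real (card B) * (F1 / sN)"
    by (rule sum_bounded_above) (use ga in auto)
  have F1pos: "F1 > 0"
  proof -
    obtain n where n: "n \<in> R" "f n \<noteq> 0" using nonzero R_def by auto
    have "\<bar>f n\<bar> \<le> F1" unfolding F1_def 
      using member_le_sum[of n R "\<lambda>n. \<bar>f n\<bar>"] fin n(1) by auto
    with n show ?thesis by simp
  qed
  define a where "a = real (card A)"
  define b where "b = real (card B)"
  have a0: "a \<ge> 0" "b \<ge> 0" by (auto simp: a_def b_def)
  have "F1 \<le> 2 * a * (G1 / sN)" using e1 e2 unfolding a_def by simp
  also have "\<dots> \<le> 2 * a * (2 * b * (F1 / sN) / sN)"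
    using e3 e4 a0 sNpos unfolding b_def
    by (intro mult_left_mono divide_right_mono) auto
  also have "\<dots> = 4 * a * b * F1 / N" using sNsq by (simp add: field_simps)
  finally have "F1 * N \<le> 4 * a * b * F1" using Npos by (simp add: field_simps)
  hence "N \<le> 4 * a * b" using F1pos by (simp add: mult.commute)
  hence "N / 16 \<le> a * b" using Npos by simp
  then show ?thesis unfolding a_def b_def A_def B_def R_def g_def N_def .
qed

end
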